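(* Let $d\geq 1$, $0<a<b<\infty$, and let $(\mu_k^+)$, $(\mu_k^-)$ be as follows: $(\mu_k^+)_{k\in\mathbb{N}}$ distinct positive reals with $\mu_k^+\to+\infty$ and $\sum_k 1/\mu_k^+=\infty$; $(\mu_k^-)_{k\in\mathbb{N}}$ distinct negative reals with $\mu_k^-\to-\infty$ and $\sum_k 1/|\mu_k^-|=\infty$. Let $(\mu_k)_{k\in\mathbb{N}}$ be an enumeration of $\{\mu_k^+\}\cup\{\mu_k^-\}$. For each $K\in\mathbb{N}$ let $\mathcal{H}_K$ be the set of functions on $A_{a,b}$ of the form $\mathbf{x}\mapsto\sum_{k=1}^K a_k\|\mathbf{x}\|^{\mu_k}+b_0$ with $a_1,\dots,a_K,b_0\in\mathbb{R}$. Then $\bigcup_{K\in\mathbb{N}}\mathcal{H}_K$ is dense in $L^2_{\mathrm{rad}}(A_{a,b})$.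
   Context: $A_{a,b}=\{\mathbf{x}\in\mathbb{R}^d: a\leq\|\mathbf{x}\|\leq b\}$ (Euclidean norm). $L^2_{\mathrm{rad}}(A_{a,b})=\{f\in L^2(A_{a,b}): f(\mathbf{x})=h(\|\mathbf{x}\|)\text{ for a.e. }\mathbf{x}\text{, for some function }h\}$ is the closed subspace of radial functions in $L^2(A_{a,b})$, with the $L^2$ norm. *)

theory Defs
  imports "HOL-Analysis.Analysis"
begin

definition annulus :: "real \<Rightarrow> real \<Rightarrow> 'a::euclidean_space set" where
  "annulus a b = {x. a \<le> norm x \<and> norm x \<le> b}"

text \<open>Real-valued L^2 functions on a set S (Lebesgue measure), as representatives.\<close>
definition L2_on :: "'a::euclidean_space set \<Rightarrow> ('a \<Rightarrow> real) set" where
  "L2_on S = {f. f \<in> borel_measurable (lebesgue_on S) \<and>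
                  integrable (lebesgue_on S) (\<lambda>x. (f x)\<^sup>2)}"

definition L2_rad :: "'a::euclidean_space set \<Rightarrow> ('a \<Rightarrow> real) set" where
  "L2_rad S = {f \<in> L2_on S. \<exists>h :: real \<Rightarrow> real. AE x in lebesgue_on S. f x = h (norm x)}"

definition L2_dist :: "'a::euclidean_space set \<Rightarrow> ('a \<Rightarrow> real) \<Rightarrow> ('a \<Rightarrow> real) \<Rightarrow> real" where
  "L2_dist S f g = sqrt (integral\<^sup>L (lebesgue_on S) (\<lambda>x. (f x - g x)\<^sup>2))"

text \<open>H_K: functions x \<mapsto> \<Sum>_{k<K} c_k |x|^{\<mu>_k} + b0 (indices start at 0).\<close>
definition H :: "(nat \<Rightarrow> real) \<Rightarrow> nat \<Rightarrow> ('a::euclidean_space \<Rightarrow> real) set" where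
  "H \<mu> K = {g. \<exists>c :: nat \<Rightarrow> real. \<exists>b0 :: real.
               g = (\<lambda>x. (\<Sum>k<K. c k * norm x powr \<mu> k) + b0)}"

end

theory Submission
  imports Defs
begin

lemma muntz_step:
  fixes m lam P :: real and A L :: "nat \<Rightarrow> real" and n :: nat
  assumes m: "0 < m" "m < lam" and dist: "\<forall>j<n. L j \<noteq> lam" and P: "0 \<le> P"
    and Qb: "\<And>x. 0 < x \<Longrightarrow> x \<le> 1 \<Longrightarrow> \<bar>x powr m - (\<Sum>j<n. A j * x powr L j)\<bar> \<le> P"
    and x: "0 < x" "x \<le> 1"
  shows "\<bar>x powr m - (\<Sum>j<n. (- A j * ((lam - m) / (L j - lam))) * x powr L j)
            - (1 + (\<Sum>j<n. A j * ((lam - m) / (L j - lam)))) * x powr lam\<bar> \<le> (1 - m / lam) * P"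
proof -
  define c where "c j = (lam - m) / (L j - lam)" for j
  define B where "B j = - A j * c j" for j
  define Bn where "Bn = 1 + (\<Sum>j<n. A j * c j)"
  define Q where "Q t = t powr m - (\<Sum>j<n. A j * t powr L j)" for t
  define R where "R t = t powr (m - lam) - Bn - (\<Sum>j<n. B j * t powr (L j - lam))" for t
  define V where "V t = (lam - m) / lam * P * (t powr (- lam) - 1)" for t
  have lam: "lam > 0" using m by simp
  have Bc: "B j * (L j - lam) = - A j * (lam - m)" if "j < n" for j
    using dist that by (simp add: B_def c_def field_simps)
  have dR: "(R has_real_derivative (- (lam - m) * t powr (- lam - 1) * Q t)) (at t)" if t: "t > 0" for t
  proof -
    have "(R has_real_derivative ((m - lam) * t powr (m - lam - 1) - (\<Sum>j<n. B j * ((L j - lam) * t powr (L j - lam - 1))))) (at t)"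
      unfolding R_def using t by (auto intro!: derivative_eq_intros sum.cong simp: ac_simps)
    moreover have "(m - lam) * t powr (m - lam - 1) - (\<Sum>j<n. B j * ((L j - lam) * t powr (L j - lam - 1)))
        = - (lam - m) * t powr (- lam - 1) * Q t"
    proof -
      have e1: "t powr (m - lam - 1) = t powr (- lam - 1) * t powr m" using t by (simp add: powr_add[symmetric] algebra_simps)
      have e2: "B j * ((L j - lam) * t powr (L j - lam - 1)) = - (lam - m) * t powr (- lam - 1) * (A j * t powr L j)" if "j < n" for j
      proof -
        have "B j * ((L j - lam) * t powr (L j - lam - 1)) = (B j * (L j - lam)) * t powr (L j - lam - 1)" by simp
        also have "\<dots> = - A j * (lam - m) * (t powr (- lam - 1) * t powr L j)"
        proof -
          have p: "t powr (- lam - 1) * t powr L j = t powr (L j - lam - 1)"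
            by (simp add: powr_add[symmetric] algebra_simps)
          show ?thesis unfolding p Bc[OF that] by simp
        qed
        finally show ?thesis by (simp add: algebra_simps)
      qed
      have "(\<Sum>j<n. B j * ((L j - lam) * t powr (L j - lam - 1))) = (\<Sum>j<n. - (lam - m) * t powr (- lam - 1) * (A j * t powr L j))"
        using e2 by (intro sum.cong) auto
      also have "\<dots> = - (lam - m) * t powr (- lam - 1) * (\<Sum>j<n. A j * t powr L j)"
        by (simp add: sum_distrib_left)
      finally show ?thesis unfolding Q_def e1 by (simp add: algebra_simps)
    qed
    ultimately show ?thesis by simp
  qed
  have dV: "(V has_real_derivative (- (lam - m) * t powr (- lam - 1) * P)) (at t)" if t: "t > 0" for t
  proof -
    have "(V has_real_derivative ((lam - m) / lam * P * (- lam * t powr (- lam - 1)))) (at t)"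
      unfolding V_def using t by (auto intro!: derivative_eq_intros)
    then show ?thesis by (rule DERIV_cong) (use lam in \<open>simp add: field_simps\<close>)
  qed
  have R1: "R 1 = 0" unfolding R_def Bn_def B_def by (simp add: sum.distrib sum_negf)
  have V1: "V 1 = 0" unfolding V_def by simp
  have pos_fac: "(lam - m) * t powr (- lam - 1) \<ge> 0" for t using m by simp
  have up: "V x - R x \<ge> 0"
  proof -
    have "(\<lambda>t. V t - R t) x \<ge> (\<lambda>t. V t - R t) 1"
    proof (rule DERIV_nonpos_imp_nonincreasing[OF x(2)])
      fix t assume t: "x \<le> t" "t \<le> 1"
      hence t0: "t > 0" using x by simp
      have "Q t \<le> P" using Qb[of t] t0 t unfolding Q_def by simp
      hence "- (lam - m) * t powr (- lam - 1) * P - - (lam - m) * t powr (- lam - 1) * Q t \<le> 0"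
        using pos_fac[of t] mult_left_mono[of "Q t" P "(lam - m) * t powr (- lam - 1)"] by (simp add: algebra_simps)
      thus "\<exists>y. ((\<lambda>t. V t - R t) has_real_derivative y) (at t) \<and> y \<le> 0"
        using DERIV_diff[OF dV[OF t0] dR[OF t0]] by blast
    qed
    thus ?thesis using R1 V1 by simp
  qed
  have lo: "V x + R x \<ge> 0"
  proof -
    have "(\<lambda>t. V t + R t) x \<ge> (\<lambda>t. V t + R t) 1"
    proof (rule DERIV_nonpos_imp_nonincreasing[OF x(2)])
      fix t assume t: "x \<le> t" "t \<le> 1"
      hence t0: "t > 0" using x by simp
      have "- Q t \<le> P" using Qb[of t] t0 t unfolding Q_def by simp
      hence "- (lam - m) * t powr (- lam - 1) * P + - (lam - m) * t powr (- lam - 1) * Q t \<le> 0"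
        using pos_fac[of t] mult_left_mono[of "- Q t" P "(lam - m) * t powr (- lam - 1)"]
        by (simp add: algebra_simps)
      thus "\<exists>y. ((\<lambda>t. V t + R t) has_real_derivative y) (at t) \<and> y \<le> 0"
        using DERIV_add[OF dV[OF t0] dR[OF t0]] by blast
    qed
    thus ?thesis using R1 V1 by simp
  qed
  have absR: "\<bar>R x\<bar> \<le> V x" using up lo by simp
  have eqQ: "x powr m - (\<Sum>j<n. B j * x powr L j) - Bn * x powr lam = x powr lam * R x"
  proof -
    have "x powr lam * R x = x powr lam * x powr (m - lam) - Bn * x powr lam - (\<Sum>j<n. B j * (x powr lam * x powr (L j - lam)))"
      unfolding R_def by (simp add: algebra_simps sum_distrib_left)
    also have "\<dots> = x powr m - Bn * x powr lam - (\<Sum>j<n. B j * x powr L j)"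
      using x by (simp add: powr_add[symmetric] algebra_simps)
    finally show ?thesis by simp
  qed
  have "\<bar>x powr lam * R x\<bar> \<le> x powr lam * V x"
    using absR by (simp add: abs_mult mult_left_mono)
  also have "x powr lam * V x = (lam - m) / lam * P * (1 - x powr lam)"
    unfolding V_def using x by (simp add: algebra_simps powr_add[symmetric])
  also have "\<dots> \<le> (lam - m) / lam * P * 1"
    using m P x by (intro mult_left_mono) auto
  also have "\<dots> = (1 - m / lam) * P" using lam by (simp add: field_simps)
  finally show ?thesis using eqQ unfolding B_def Bn_def c_def by simp
qed


lemma muntz_iter:
  fixes m :: real and L :: "nat \<Rightarrow> real"
  assumes m: "0 < m" and L: "inj L" "\<And>j. L j > m"
  shows "\<exists>A. \<forall>x. 0 < x \<and> x \<le> 1 \<longrightarrow> \<bar>x powr m - (\<Sum>j<n. A j * x powr L j)\<bar> \<le> (\<Prod>j<n. 1 - m / L j)"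
proof (induction n)
  case 0
  show ?case using m by (auto intro!: exI[of _ "\<lambda>_. 0"] simp: powr_le1)
next
  case (Suc n)
  then obtain A where A: "\<And>x. 0 < x \<Longrightarrow> x \<le> 1 \<Longrightarrow> \<bar>x powr m - (\<Sum>j<n. A j * x powr L j)\<bar> \<le> (\<Prod>j<n. 1 - m / L j)"
    by blast
  define lam where "lam = L n"
  define A' where "A' j = (if j < n then - A j * ((lam - m) / (L j - lam)) else 1 + (\<Sum>j<n. A j * ((lam - m) / (L j - lam))))" for j
  have P0: "0 \<le> (\<Prod>j<n. 1 - m / L j)"
  proof (intro prod_nonneg)
    fix j assume "j \<in> {..<n}"
    have "L j > 0" using L(2)[of j] m by linarith
    hence "m / L j \<le> 1" using L(2)[of j] by (simp add: divide_le_eq)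
    thus "0 \<le> 1 - m / L j" by simp
  qed
  have dist: "\<forall>j<n. L j \<noteq> lam" using L(1) unfolding lam_def inj_def by auto
  show ?case
  proof (intro exI allI impI)
    fix x :: real assume x: "0 < x \<and> x \<le> 1"
    have "(\<Sum>j<Suc n. A' j * x powr L j) = (\<Sum>j<n. (- A j * ((lam - m) / (L j - lam))) * x powr L j)
        + (1 + (\<Sum>j<n. A j * ((lam - m) / (L j - lam)))) * x powr lam"
      by (simp add: A'_def lam_def)
    hence "\<bar>x powr m - (\<Sum>j<Suc n. A' j * x powr L j)\<bar> \<le> (1 - m / lam) * (\<Prod>j<n. 1 - m / L j)"
      using muntz_step[OF m _ dist P0 A, of x] L(2)[of n] x unfolding lam_def by (simp add: algebra_simps)
    thus "\<bar>x powr m - (\<Sum>j<Suc n. A' j * x powr L j)\<bar> \<le> (\<Prod>j<Suc n. 1 - m / L j)"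
      by (simp add: lam_def mult.commute)
  qed
qed

lemma muntz_conv:
  fixes m :: real and L :: "nat \<Rightarrow> real"
  assumes m: "0 < m" and L: "inj L" "\<And>j. L j > m" and div: "\<not> summable (\<lambda>j. 1 / L j)"
    and e: "e > 0"
  shows "\<exists>n A. \<forall>x. 0 < x \<and> x \<le> 1 \<longrightarrow> \<bar>x powr m - (\<Sum>j<n. A j * x powr L j)\<bar> \<le> e"
proof -
  have Lpos: "L j > 0" for j using L(2)[of j] m by linarith
  obtain n where n: "(\<Sum>j<n. 1 / L j) > - ln e / m"
  proof -
    have "\<not> (\<forall>n. (\<Sum>j<n. 1 / L j) \<le> - ln e / m)"
      using div summableI_nonneg_bounded[of "\<lambda>j. 1 / L j"] Lpos by (meson less_eq_real_def zero_less_divide_1_iff)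
    thus ?thesis using that by (meson not_le)
  qed
  have "(\<Prod>j<n. 1 - m / L j) \<le> (\<Prod>j<n. exp (- (m / L j)))"
  proof (rule prod_mono)
    fix j assume "j \<in> {..<n}"
    have "m / L j < 1" using L(2)[of j] Lpos[of j] by simp
    thus "0 \<le> 1 - m / L j \<and> 1 - m / L j \<le> exp (- (m / L j))"
      using exp_ge_add_one_self[of "- (m / L j)"] by simp
  qed
  also have "\<dots> = exp (- m * (\<Sum>j<n. 1 / L j))"
    by (simp add: exp_sum[symmetric] sum_distrib_left sum_negf)
  also have "\<dots> < exp (ln e)"
    using n m by (simp add: field_simps)
  also have "\<dots> = e" using e by simp
  finally have "(\<Prod>j<n. 1 - m / L j) < e" .
  with muntz_iter[OF m L, of n] show ?thesis by (meson less_eq_real_def order_trans)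
qed


definition app :: "real set \<Rightarrow> real \<Rightarrow> real \<Rightarrow> (real \<Rightarrow> real) \<Rightarrow> bool" where
  "app E a b \<phi> \<longleftrightarrow> (\<forall>\<delta>>0. \<exists>F w c. finite F \<and> F \<subseteq> E \<and>
      (\<forall>r\<in>{a..b}. \<bar>\<phi> r - ((\<Sum>e\<in>F. w e * r powr e) + c)\<bar> \<le> \<delta>))"

lemma sum_merge:
  assumes "finite F" "finite G"
  shows "(\<Sum>e\<in>F. w e * r powr e) + (\<Sum>e\<in>G. v e * r powr e) =
    (\<Sum>e\<in>F \<union> G. ((if e \<in> F then w e else 0) + (if e \<in> G then v e else 0)) * r powr e)"
proof -
  have 1: "(\<Sum>e\<in>F. w e * r powr e) = (\<Sum>e\<in>F \<union> G. (if e \<in> F then w e else 0) * r powr e)"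
    using assms by (intro sum.mono_neutral_cong_left) auto
  have 2: "(\<Sum>e\<in>G. v e * r powr e) = (\<Sum>e\<in>F \<union> G. (if e \<in> G then v e else 0) * r powr e)"
    using assms by (intro sum.mono_neutral_cong_left) auto
  show ?thesis unfolding 1 2 sum.distrib[symmetric] by (simp add: algebra_simps)
qed

lemma app_add:
  assumes "app E a b \<phi>" "app E a b \<psi>"
  shows "app E a b (\<lambda>r. \<phi> r + \<psi> r)"
  unfolding app_def
proof (intro allI impI)
  fix \<delta> :: real assume d: "\<delta> > 0"
  obtain F w c where F: "finite F" "F \<subseteq> E" "\<And>r. r\<in>{a..b} \<Longrightarrow> \<bar>\<phi> r - ((\<Sum>e\<in>F. w e * r powr e) + c)\<bar> \<le> \<delta>/2"
    using assms(1) d unfolding app_def by (meson half_gt_zero)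
  obtain G v c' where G: "finite G" "G \<subseteq> E" "\<And>r. r\<in>{a..b} \<Longrightarrow> \<bar>\<psi> r - ((\<Sum>e\<in>G. v e * r powr e) + c')\<bar> \<le> \<delta>/2"
    using assms(2) d unfolding app_def by (meson half_gt_zero)
  show "\<exists>F w c. finite F \<and> F \<subseteq> E \<and> (\<forall>r\<in>{a..b}. \<bar>\<phi> r + \<psi> r - ((\<Sum>e\<in>F. w e * r powr e) + c)\<bar> \<le> \<delta>)"
  proof (intro exI conjI ballI)
    show "finite (F \<union> G)" "F \<union> G \<subseteq> E" using F G by auto
    fix r assume r: "r \<in> {a..b}"
    show "\<bar>\<phi> r + \<psi> r - ((\<Sum>e\<in>F \<union> G. ((if e \<in> F then w e else 0) + (if e \<in> G then v e else 0)) * r powr e) + (c + c'))\<bar> \<le> \<delta>"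
      using F(3)[OF r] G(3)[OF r] sum_merge[OF F(1) G(1), of w r v] by linarith
  qed
qed

lemma app_scale:
  assumes "app E a b \<phi>"
  shows "app E a b (\<lambda>r. k * \<phi> r)"
  unfolding app_def
proof (intro allI impI)
  fix \<delta> :: real assume d: "\<delta> > 0"
  have d': "\<delta> / (\<bar>k\<bar> + 1) > 0" using d by simp
  obtain F w c where F: "finite F" "F \<subseteq> E" "\<And>r. r\<in>{a..b} \<Longrightarrow> \<bar>\<phi> r - ((\<Sum>e\<in>F. w e * r powr e) + c)\<bar> \<le> \<delta> / (\<bar>k\<bar> + 1)"
    using assms d' unfolding app_def by meson
  show "\<exists>F w c. finite F \<and> F \<subseteq> E \<and> (\<forall>r\<in>{a..b}. \<bar>k * \<phi> r - ((\<Sum>e\<in>F. w e * r powr e) + c)\<bar> \<le> \<delta>)"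
  proof (intro exI conjI ballI)
    show "finite F" "F \<subseteq> E" using F by auto
    fix r assume r: "r \<in> {a..b}"
    have "\<bar>k * \<phi> r - ((\<Sum>e\<in>F. (k * w e) * r powr e) + k * c)\<bar> = \<bar>k\<bar> * \<bar>\<phi> r - ((\<Sum>e\<in>F. w e * r powr e) + c)\<bar>"
      by (simp add: abs_mult[symmetric] algebra_simps sum_distrib_left)
    also have "\<dots> \<le> \<bar>k\<bar> * (\<delta> / (\<bar>k\<bar> + 1))" by (rule mult_left_mono[OF F(3)[OF r] abs_ge_zero])
    also have "\<dots> \<le> \<delta>" using d by (simp add: field_simps)
    finally show "\<bar>k * \<phi> r - ((\<Sum>e\<in>F. (k * w e) * r powr e) + k * c)\<bar> \<le> \<delta>" .
  qed
qed

lemma app_const: "app E a b (\<lambda>r. k)"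
  unfolding app_def by (intro allI impI exI[of _ "{}"] exI[of _ "\<lambda>_. 0"] exI[of _ k]) auto

lemma app_monomial:
  fixes N :: nat
  assumes ab: "0 < a" "a \<le> b" and N: "N \<ge> 1"
    and L: "inj L" "range L \<subseteq> E" "\<And>j. L j > real N" "\<not> summable (\<lambda>j. 1 / L j)"
  shows "app E a b (\<lambda>r. r ^ N)"
  unfolding app_def
proof (intro allI impI)
  fix \<delta> :: real assume d: "\<delta> > 0"
  have b: "b > 0" using ab by simp
  have bN: "b ^ N > 0" using b by simp
  have "\<exists>n A. \<forall>x. 0 < x \<and> x \<le> 1 \<longrightarrow> \<bar>x powr real N - (\<Sum>j<n. A j * x powr L j)\<bar> \<le> \<delta> / b ^ N"
    using muntz_conv[of "real N" L "\<delta> / b ^ N"] N L d bN by auto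
  then obtain n A where A: "\<And>x. 0 < x \<Longrightarrow> x \<le> 1 \<Longrightarrow> \<bar>x powr real N - (\<Sum>j<n. A j * x powr L j)\<bar> \<le> \<delta> / b ^ N"
    by blast
  define F where "F = L ` {..<n}"
  define w where "w e = b ^ N * A (the_inv_into {..<n} L e) * b powr (- e)" for e
  show "\<exists>F w c. finite F \<and> F \<subseteq> E \<and> (\<forall>r\<in>{a..b}. \<bar>r ^ N - ((\<Sum>e\<in>F. w e * r powr e) + c)\<bar> \<le> \<delta>)"
  proof (intro exI conjI ballI)
    show "finite F" "F \<subseteq> E" using L(2) unfolding F_def by auto
    fix r assume r: "r \<in> {a..b}"
    have r0: "r > 0" using r ab by simp
    have x: "0 < r / b" "r / b \<le> 1" using r0 b r by auto
    have inj': "inj_on L {..<n}" using L(1) by (meson inj_on_subset subset_UNIV)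
    have "(\<Sum>e\<in>F. w e * r powr e) = (\<Sum>j<n. w (L j) * r powr L j)"
      unfolding F_def by (rule sum.reindex[OF inj', unfolded comp_def])
    also have "\<dots> = b ^ N * (\<Sum>j<n. A j * (r / b) powr L j)"
      unfolding sum_distrib_left
    proof (intro sum.cong refl)
      fix j assume j: "j \<in> {..<n}"
      have "the_inv_into {..<n} L (L j) = j" using the_inv_into_f_f[OF inj' j] .
      thus "w (L j) * r powr L j = b ^ N * (A j * (r / b) powr L j)"
        unfolding w_def using r0 b by (simp add: powr_divide powr_minus field_simps)
    qed
    finally have eq: "(\<Sum>e\<in>F. w e * r powr e) = b ^ N * (\<Sum>j<n. A j * (r / b) powr L j)" .
    have rN: "r ^ N = b ^ N * (r / b) powr real N"
      using r0 b by (simp add: powr_realpow power_divide)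
    have "\<bar>r ^ N - ((\<Sum>e\<in>F. w e * r powr e) + 0)\<bar> = b ^ N * \<bar>(r / b) powr real N - (\<Sum>j<n. A j * (r / b) powr L j)\<bar>"
      unfolding eq rN using bN by (simp add: right_diff_distrib[symmetric] abs_mult)
    also have "\<dots> \<le> b ^ N * (\<delta> / b ^ N)" by (rule mult_left_mono[OF A[OF x]]) (use bN in simp)
    also have "\<dots> = \<delta>" using b by simp
    finally show "\<bar>r ^ N - ((\<Sum>e\<in>F. w e * r powr e) + 0)\<bar> \<le> \<delta>" .
  qed
qed

lemma app_sum:
  assumes "\<And>i. i \<in> I \<Longrightarrow> app E a b (f i)" "finite I"
  shows "app E a b (\<lambda>r. \<Sum>i\<in>I. f i r)"
  using assms(2,1)
proof (induction I rule: finite_induct)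
  case empty
  then show ?case using app_const[of E a b 0] by simp
next
  case (insert x F)
  then show ?case using app_add[of E a b "f x" "\<lambda>r. \<Sum>i\<in>F. f i r"] by simp
qed

lemma abs_tri3:
  fixes x y z d1 d2 :: real
  assumes "\<bar>x - y\<bar> \<le> d1" "\<bar>y - z\<bar> \<le> d2"
  shows "\<bar>x - z\<bar> \<le> d1 + d2"
proof -
  have "\<bar>x - z\<bar> \<le> \<bar>x - y\<bar> + \<bar>y - z\<bar>" using abs_triangle_ineq[of "x - y" "y - z"] by simp
  thus ?thesis using assms by linarith
qed

lemma app_limit:
  assumes "\<And>\<delta>. \<delta> > 0 \<Longrightarrow> \<exists>\<psi>. app E a b \<psi> \<and> (\<forall>r\<in>{a..b}. \<bar>\<phi> r - \<psi> r\<bar> \<le> \<delta>)"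
  shows "app E a b \<phi>"
  unfolding app_def
proof (intro allI impI)
  fix \<delta> :: real assume d: "\<delta> > 0"
  obtain \<psi> where \<psi>: "app E a b \<psi>" "\<And>r. r\<in>{a..b} \<Longrightarrow> \<bar>\<phi> r - \<psi> r\<bar> \<le> \<delta>/2"
    using assms[of "\<delta>/2"] d by auto
  obtain F w c where F: "finite F" "F \<subseteq> E" "\<And>r. r\<in>{a..b} \<Longrightarrow> \<bar>\<psi> r - ((\<Sum>e\<in>F. w e * r powr e) + c)\<bar> \<le> \<delta>/2"
    using \<psi>(1) d unfolding app_def by (meson half_gt_zero)
  show "\<exists>F w c. finite F \<and> F \<subseteq> E \<and> (\<forall>r\<in>{a..b}. \<bar>\<phi> r - ((\<Sum>e\<in>F. w e * r powr e) + c)\<bar> \<le> \<delta>)"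
  proof (intro exI[of _ F] exI[of _ w] exI[of _ c] conjI ballI)
    show "finite F" "F \<subseteq> E" using F by auto
    fix r assume r: "r \<in> {a..b}"
    show "\<bar>\<phi> r - ((\<Sum>e\<in>F. w e * r powr e) + c)\<bar> \<le> \<delta>"
      using abs_tri3[OF \<psi>(2)[OF r] F(3)[OF r]] by simp
  qed
qed

lemma app_continuous:
  assumes ab: "0 < a" "a \<le> b"
    and L: "\<And>N::nat. \<exists>L. inj L \<and> range L \<subseteq> E \<and> (\<forall>j. L j > real N) \<and> \<not> summable (\<lambda>j. 1 / L j)"
    and G: "continuous_on {a..b} G"
  shows "app E a b G"
proof (rule app_limit)
  fix \<delta> :: real assume d: "\<delta> > 0"
  obtain g where g: "real_polynomial_function g" "\<And>x. x \<in> {a..b} \<Longrightarrow> \<bar>G x - g x\<bar> < \<delta>"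
    using Stone_Weierstrass_real_polynomial_function[OF compact_Icc G d] by blast
  obtain c n where gc: "g = (\<lambda>x. \<Sum>i\<le>n. c i * x ^ i)"
    using g(1) real_polynomial_function_iff_sum by blast
  have mono: "app E a b (\<lambda>r. r ^ i)" for i
  proof (cases "i = 0")
    case True
    then show ?thesis using app_const[of E a b 1] by simp
  next
    case False
    obtain L where "inj L" "range L \<subseteq> E" "\<forall>j. L j > real i" "\<not> summable (\<lambda>j. 1 / L j)"
      using L by blast
    then show ?thesis using app_monomial[OF ab, of i L E] False by auto
  qed
  have "app E a b g" unfolding gc
    by (rule app_sum) (auto intro: app_scale mono)
  thus "\<exists>\<psi>. app E a b \<psi> \<and> (\<forall>r\<in>{a..b}. \<bar>G r - \<psi> r\<bar> \<le> \<delta>)"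
    using g(2) by (meson less_eq_real_def)
qed


lemma annulus_basic:
  shows "closed (annulus a b :: 'a::euclidean_space set)"
    and "annulus a b \<subseteq> (cball 0 b :: 'a set)"
    and "compact (annulus a b :: 'a set)"
    and "annulus a b \<in> sets (lebesgue :: 'a measure)"
    and "annulus a b \<in> (lmeasurable :: 'a set set)"
proof -
  have c: "closed (annulus a b :: 'a set)"
    unfolding annulus_def Collect_conj_eq by (intro closed_Int closed_Collect_le continuous_intros)
  show s: "annulus a b \<subseteq> (cball 0 b :: 'a set)" unfolding annulus_def by auto
  show cp: "compact (annulus a b :: 'a set)" using c s bounded_cball bounded_subset compact_eq_bounded_closed by blast
  show "closed (annulus a b :: 'a set)" by (fact c)
  show "annulus a b \<in> (lmeasurable :: 'a set set)" using cp lmeasurable_compact by blast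
  then show "annulus a b \<in> sets (lebesgue :: 'a measure)" by (simp add: fmeasurable_def)
qed

lemma space_ann[simp]: "space (lebesgue_on (annulus a b :: 'a::euclidean_space set)) = annulus a b"
  by simp

lemma finite_measure_ann: "finite_measure (lebesgue_on (annulus a b :: 'a::euclidean_space set))"
  using annulus_basic(5) by (rule finite_measure_lebesgue_on)

lemma sets_ann_iff:
  "E \<in> sets (lebesgue_on (annulus a b :: 'a::euclidean_space set)) \<longleftrightarrow> E \<subseteq> annulus a b \<and> E \<in> sets lebesgue"
  using annulus_basic(4)[of a b] by (subst sets_restrict_space_iff) auto

lemma bounded_integrable_ann:
  fixes u :: "'a::euclidean_space \<Rightarrow> real"
  assumes "u \<in> borel_measurable (lebesgue_on (annulus a b))" "\<And>x. x \<in> annulus a b \<Longrightarrow> \<bar>u x\<bar> \<le> B"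
  shows "integrable (lebesgue_on (annulus a b)) u"
proof -
  interpret finite_measure "lebesgue_on (annulus a b :: 'a set)" by (rule finite_measure_ann)
  show ?thesis using assms by (intro integrable_const_bound[where B=B]) auto
qed

lemma sq_add_le:
  fixes u v :: "'a \<Rightarrow> real"
  assumes u: "u \<in> borel_measurable M" "integrable M (\<lambda>x. (u x)\<^sup>2)"
    and v: "v \<in> borel_measurable M" "integrable M (\<lambda>x. (v x)\<^sup>2)"
  shows "integrable M (\<lambda>x. (u x + v x)\<^sup>2)"
    and "integral\<^sup>L M (\<lambda>x. (u x + v x)\<^sup>2) \<le> 2 * integral\<^sup>L M (\<lambda>x. (u x)\<^sup>2) + 2 * integral\<^sup>L M (\<lambda>x. (v x)\<^sup>2)"
proof -
  have pw: "(u x + v x)\<^sup>2 \<le> 2 * (u x)\<^sup>2 + 2 * (v x)\<^sup>2" for x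
  proof -
    have "(u x + v x)\<^sup>2 + (u x - v x)\<^sup>2 = 2 * (u x)\<^sup>2 + 2 * (v x)\<^sup>2"
      by (simp add: power2_eq_square algebra_simps)
    moreover have "0 \<le> (u x - v x)\<^sup>2" by simp
    ultimately show ?thesis by linarith
  qed
  have i2: "integrable M (\<lambda>x. 2 * (u x)\<^sup>2 + 2 * (v x)\<^sup>2)" using u v by auto
  show i: "integrable M (\<lambda>x. (u x + v x)\<^sup>2)"
    by (rule Bochner_Integration.integrable_bound[OF i2]) (use u v pw in auto)
  have "integral\<^sup>L M (\<lambda>x. (u x + v x)\<^sup>2) \<le> integral\<^sup>L M (\<lambda>x. 2 * (u x)\<^sup>2 + 2 * (v x)\<^sup>2)"
    by (rule Bochner_Integration.integral_mono[OF i i2 pw])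
  also have "\<dots> = 2 * integral\<^sup>L M (\<lambda>x. (u x)\<^sup>2) + 2 * integral\<^sup>L M (\<lambda>x. (v x)\<^sup>2)"
    using u v by simp
  finally show "integral\<^sup>L M (\<lambda>x. (u x + v x)\<^sup>2) \<le> 2 * integral\<^sup>L M (\<lambda>x. (u x)\<^sup>2) + 2 * integral\<^sup>L M (\<lambda>x. (v x)\<^sup>2)" .
qed

lemma cont_norm_meas:
  fixes g :: "real \<Rightarrow> real"
  assumes "continuous_on UNIV g"
  shows "(\<lambda>x::'a::euclidean_space. g (norm x)) \<in> borel_measurable (lebesgue_on (annulus a b))"
proof -
  have "continuous_on (annulus a b) (\<lambda>x::'a. g (norm x))"
    by (rule continuous_on_compose2[OF assms continuous_on_norm_id]) auto
  thus ?thesis using annulus_basic(4) by (rule continuous_imp_measurable_on_sets_lebesgue)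
qed

lemma indicator_approx:
  fixes S :: "real set" and \<eta> :: real
  assumes E: "{x::'a::euclidean_space. x \<in> annulus a b \<and> norm x \<in> S} \<in> sets lebesgue" and eta: "\<eta> > 0"
  shows "\<exists>g. continuous_on UNIV g \<and> (\<forall>r. 0 \<le> g r \<and> g r \<le> 1) \<and>
     integrable (lebesgue_on (annulus a b)) (\<lambda>x::'a. (indicator {x. x \<in> annulus a b \<and> norm x \<in> S} x - g (norm x))\<^sup>2) \<and>
     integral\<^sup>L (lebesgue_on (annulus a b)) (\<lambda>x::'a. (indicator {x. x \<in> annulus a b \<and> norm x \<in> S} x - g (norm x))\<^sup>2) \<le> \<eta>"
proof -
  define A :: "'a set" where "A = annulus a b"
  define E where "E = {x. x \<in> A \<and> norm x \<in> S}"
  have Em: "E \<in> sets lebesgue" using E unfolding E_def A_def .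
  have EA: "E \<subseteq> A" unfolding E_def by auto
  obtain U where U: "open U" "E \<subseteq> U" "U - E \<in> lmeasurable" "emeasure lebesgue (U - E) < ennreal (\<eta>/2)"
    using sets_lebesgue_outer_open[OF Em, of "\<eta>/2"] eta by auto
  obtain K where K: "closed K" "K \<subseteq> E" "E - K \<in> lmeasurable" "emeasure lebesgue (E - K) < ennreal (\<eta>/2)"
    using sets_lebesgue_inner_closed[OF Em, of "\<eta>/2"] eta by auto
  have Kc: "compact K"
    using K(1,2) EA annulus_basic(2)[of a b] unfolding A_def
    by (meson bounded_cball bounded_subset compact_eq_bounded_closed order_trans)
  define C where "C = norm ` K"
  define Z where "Z = norm ` (- U \<inter> cball (0::'a) b)"
  have Cc: "closed C" unfolding C_def
    by (intro compact_imp_closed compact_continuous_image[OF continuous_on_norm_id Kc])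
  have Zc: "closed Z" unfolding Z_def
    using U(1) by (intro compact_imp_closed compact_continuous_image[OF continuous_on_norm_id])
       (simp add: closed_Compl closed_Int_compact)
  have CZ: "C \<inter> Z = {}"
  proof (rule ccontr)
    assume "C \<inter> Z \<noteq> {}"
    then obtain k y where k: "k \<in> K" and y: "y \<notin> U" "norm y \<le> b" and eq: "norm k = norm y"
      unfolding C_def Z_def by auto
    have "k \<in> E" using k K(2) by auto
    hence "y \<in> E" using y eq unfolding E_def A_def annulus_def by auto
    thus False using U(2) y by auto
  qed
  obtain g :: "real \<Rightarrow> real" where g: "continuous_on UNIV g" "\<And>r. g r \<in> closed_segment 1 0"
    "\<And>r. r \<in> C \<Longrightarrow> g r = 1" "\<And>r. r \<in> Z \<Longrightarrow> g r = 0"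
    using Urysohn[OF Cc Zc CZ, of 1 0] by blast
  have g01: "0 \<le> g r \<and> g r \<le> 1" for r using g(2)[of r] by (auto simp: closed_segment_eq_real_ivl)
  define M where "M = lebesgue_on A"
  have UK: "U - K \<in> lmeasurable"
  proof -
    have "U - K = (U - E) \<union> (E - K)" using K(2) U(2) by auto
    thus ?thesis using U(3) K(3) by (metis fmeasurable.Un)
  qed
  have mUK: "measure lebesgue (U - K) < \<eta>"
  proof -
    have "U - K = (U - E) \<union> (E - K)" using K(2) U(2) by auto
    hence "measure lebesgue (U - K) \<le> measure lebesgue (U - E) + measure lebesgue (E - K)"
      using U(3) K(3) by (simp add: measure_Un_le fmeasurable_def)
    moreover have "measure lebesgue (U - E) < \<eta>/2"
      using U(4) U(3) eta by (simp add: emeasure_eq_measure2 ennreal_less_iff)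
    moreover have "measure lebesgue (E - K) < \<eta>/2"
      using K(4) K(3) eta by (simp add: emeasure_eq_measure2 ennreal_less_iff)
    ultimately show ?thesis by linarith
  qed
  have pw: "(indicator E x - g (norm x))\<^sup>2 \<le> indicator (U - K) x" if x: "x \<in> A" for x
  proof (cases "x \<in> K")
    case True
    hence "x \<in> E" "norm x \<in> C" using K(2) unfolding C_def by auto
    then show ?thesis using g(3) by simp
  next
    case nK: False
    show ?thesis
    proof (cases "x \<in> U")
      case True
      have "(indicator E x - g (norm x))\<^sup>2 \<le> 1"
        using g01[of "norm x"] by (auto simp: indicator_def power2_eq_square intro: mult_le_one)
      then show ?thesis using True nK by simp
    next
      case False
      hence "x \<notin> E" "norm x \<in> Z" using U(2) x unfolding Z_def A_def annulus_def by auto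
      then show ?thesis using g(4) by simp
    qed
  qed
  have Em': "E \<in> sets M" unfolding M_def A_def using Em EA by (simp add: sets_ann_iff A_def)
  have meas: "(\<lambda>x. (indicator E x - g (norm x))\<^sup>2) \<in> borel_measurable M"
    unfolding M_def A_def using Em' cont_norm_meas[OF g(1)] unfolding M_def A_def by measurable
  have iUK: "integrable M (indicator (U - K) :: 'a \<Rightarrow> real)"
    unfolding M_def A_def
  proof (rule bounded_integrable_ann[where B=1])
    have "U - K \<in> sets lebesgue" using UK by (simp add: fmeasurable_def)
    hence "(indicator (U - K) :: 'a \<Rightarrow> real) \<in> borel_measurable lebesgue" by (rule borel_measurable_indicator)
    thus "(indicator (U - K) :: 'a \<Rightarrow> real) \<in> borel_measurable (lebesgue_on (annulus a b))"
      by (rule measurable_restrict_space1)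
  qed auto
  have i: "integrable M (\<lambda>x. (indicator E x - g (norm x))\<^sup>2)"
    unfolding M_def A_def
  proof (rule bounded_integrable_ann[where B=1])
    show "(\<lambda>x. (indicator E x - g (norm x))\<^sup>2) \<in> borel_measurable (lebesgue_on (annulus a b))"
      using meas unfolding M_def A_def .
    fix x :: 'a
    show "\<bar>(indicator E x - g (norm x))\<^sup>2\<bar> \<le> 1"
      using g01[of "norm x"] by (auto simp: indicator_def power2_eq_square intro: mult_le_one)
  qed
  have "integral\<^sup>L M (\<lambda>x. (indicator E x - g (norm x))\<^sup>2) \<le> integral\<^sup>L M (indicator (U - K))"
    by (rule Bochner_Integration.integral_mono[OF i iUK]) (use pw in \<open>auto simp: M_def\<close>)
  also have "\<dots> = measure M ((U - K) \<inter> A)" by (simp add: M_def)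
  also have "\<dots> = measure lebesgue ((U - K) \<inter> A)"
    unfolding M_def by (rule measure_restrict_space) (use annulus_basic(4)[of a b] in \<open>auto simp: A_def\<close>)
  also have "\<dots> \<le> measure lebesgue (U - K)"
    using UK annulus_basic(4)[of a b] by (intro measure_mono_fmeasurable) (auto simp: A_def fmeasurable_def)
  finally have "integral\<^sup>L M (\<lambda>x. (indicator E x - g (norm x))\<^sup>2) \<le> \<eta>" using mUK by linarith
  thus ?thesis using i g(1) g01 unfolding M_def E_def A_def by blast
qed


definition qz :: "nat \<Rightarrow> real \<Rightarrow> real" where
  "qz n y = real_of_int \<lfloor>real n * max (- real n) (min (real n) y)\<rfloor> / real n"

lemma qz_meas[measurable]: "qz n \<in> borel_measurable borel"
  unfolding qz_def by measurable

lemma qz_bound: "\<bar>y - qz n y\<bar> \<le> 2 * \<bar>y\<bar> + 1"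
proof (cases "n = 0")
  case True
  then show ?thesis by (simp add: qz_def)
next
  case False
  define c where "c = max (- real n) (min (real n) y)"
  have n: "real n \<ge> 1" using False by simp
  have c: "\<bar>c\<bar> \<le> \<bar>y\<bar>" unfolding c_def by auto
  have 1: "real_of_int \<lfloor>real n * c\<rfloor> \<le> real n * c" by (rule of_int_floor_le)
  have 2: "real n * c < real_of_int \<lfloor>real n * c\<rfloor> + 1" by linarith
  have "qz n y \<le> c" using 1 n unfolding qz_def c_def[symmetric] by (simp add: divide_le_eq mult.commute)
  moreover have "qz n y \<ge> c - 1"
  proof -
    have "real n * (c - 1) \<le> real_of_int \<lfloor>real n * c\<rfloor>" using 2 n by (simp add: algebra_simps)
    thus ?thesis using n unfolding qz_def c_def[symmetric] by (simp add: le_divide_eq mult.commute)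
  qed
  ultimately show ?thesis using c by linarith
qed

lemma qz_close: "real n \<ge> \<bar>y\<bar> \<Longrightarrow> n \<ge> 1 \<Longrightarrow> \<bar>y - qz n y\<bar> \<le> 1 / real n"
proof -
  assume a: "real n \<ge> \<bar>y\<bar>" "n \<ge> 1"
  hence c: "max (- real n) (min (real n) y) = y" by auto
  have n: "real n > 0" using a by simp
  have 1: "real_of_int \<lfloor>real n * y\<rfloor> \<le> real n * y" by (rule of_int_floor_le)
  have 2: "real n * y < real_of_int \<lfloor>real n * y\<rfloor> + 1" by linarith
  have "qz n y \<le> y" using 1 n unfolding qz_def c by (simp add: divide_le_eq mult.commute)
  moreover have "qz n y \<ge> y - 1 / real n"
  proof -
    have "real n * y - 1 \<le> real_of_int \<lfloor>real n * y\<rfloor>" using 2 by simp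
    hence "(real n * y - 1) / real n \<le> real_of_int \<lfloor>real n * y\<rfloor> / real n" using n by (simp add: divide_right_mono)
    thus ?thesis using n unfolding qz_def c by (simp add: diff_divide_distrib)
  qed
  ultimately show ?thesis by linarith
qed

lemma qz_range: "\<lfloor>real n * max (- real n) (min (real n) y)\<rfloor> \<in> {- (int n * int n)..int n * int n}"
proof -
  define c where "c = max (- real n) (min (real n) y)"
  have "- real n \<le> c" "c \<le> real n" unfolding c_def by auto
  hence "- (real n * real n) \<le> real n * c" "real n * c \<le> real n * real n"
    using mult_left_mono[of "- real n" c "real n"] mult_left_mono[of c "real n" "real n"] by simp_all
  hence "- (int n * int n) \<le> \<lfloor>real n * c\<rfloor>" "\<lfloor>real n * c\<rfloor> \<le> int n * int n"
    by (simp_all add: le_floor_iff floor_le_iff)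
  thus ?thesis unfolding c_def by simp
qed

lemma sqb: "(2 * \<bar>y::real\<bar> + 1)\<^sup>2 \<le> 8 * y\<^sup>2 + 2"
proof -
  have "0 \<le> (2 * \<bar>y\<bar> - 1)\<^sup>2" by simp
  moreover have "(2 * \<bar>y\<bar> - 1)\<^sup>2 = 4 * y\<^sup>2 - 4 * \<bar>y\<bar> + 1" by (simp add: power2_eq_square algebra_simps)
  moreover have "(2 * \<bar>y\<bar> + 1)\<^sup>2 = 4 * y\<^sup>2 + 4 * \<bar>y\<bar> + 1" by (simp add: power2_eq_square algebra_simps)
  ultimately show ?thesis by linarith
qed

lemma quantize_approx:
  fixes f :: "'a::euclidean_space \<Rightarrow> real"
  assumes f: "f \<in> L2_rad (annulus a b)" and eta: "\<eta> > 0"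
  shows "\<exists>(J :: int set) \<beta> S. finite J \<and> (\<forall>j\<in>J. {x::'a. x \<in> annulus a b \<and> norm x \<in> S j} \<in> sets lebesgue) \<and>
     integral\<^sup>L (lebesgue_on (annulus a b)) (\<lambda>x. (f x - (\<Sum>j\<in>J. (\<beta> j :: real) * indicator {x. x \<in> annulus a b \<and> norm x \<in> S j} x))\<^sup>2) < \<eta>"
proof -
  define A :: "'a set" where "A = annulus a b"
  define M where "M = lebesgue_on A"
  have fm[measurable]: "f \<in> borel_measurable M" and f2: "integrable M (\<lambda>x. (f x)\<^sup>2)"
    and "\<exists>h :: real \<Rightarrow> real. AE x in M. f x = h (norm x)"
    using f unfolding L2_rad_def L2_on_def M_def A_def by auto
  then obtain h :: "real \<Rightarrow> real" where h: "AE x in M. f x = h (norm x)" by blast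
  define s where "s n x = (f x - qz n (f x))\<^sup>2" for n x
  have sm: "s n \<in> borel_measurable M" for n unfolding s_def by measurable
  have wi: "integrable M (\<lambda>x. 8 * (f x)\<^sup>2 + 2)"
  proof -
    interpret finite_measure M unfolding M_def A_def by (rule finite_measure_ann)
    show ?thesis using f2 by simp
  qed
  have bd: "norm (s n x) \<le> 8 * (f x)\<^sup>2 + 2" for n x
  proof -
    have "\<bar>f x - qz n (f x)\<bar> \<le> 2 * \<bar>f x\<bar> + 1" by (rule qz_bound)
    hence "(f x - qz n (f x))\<^sup>2 \<le> (2 * \<bar>f x\<bar> + 1)\<^sup>2"
      by (metis abs_ge_zero power2_abs power_mono)
    also have "\<dots> \<le> 8 * (f x)\<^sup>2 + 2"
      by (rule sqb)
    finally show ?thesis unfolding s_def by simp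
  qed
  have lim: "(\<lambda>n. s n x) \<longlonglongrightarrow> 0" for x
  proof (rule Lim_null_comparison[where g="\<lambda>n. 1 / real n"])
    show "(\<lambda>n. 1 / real n) \<longlonglongrightarrow> 0" by (rule lim_inverse_n')
    obtain N :: nat where N: "real N \<ge> \<bar>f x\<bar>" using real_nat_ceiling_ge by blast
    show "\<forall>\<^sub>F n in sequentially. norm (s n x) \<le> 1 / real n"
      unfolding eventually_sequentially
    proof (intro exI[of _ "max N 1"] allI impI)
      fix n assume n: "max N 1 \<le> n"
      hence n1: "n \<ge> 1" "real n \<ge> \<bar>f x\<bar>" using N by auto
      have c: "\<bar>f x - qz n (f x)\<bar> \<le> 1 / real n" by (rule qz_close[OF n1(2) n1(1)])
      have "(f x - qz n (f x))\<^sup>2 \<le> (1 / real n)\<^sup>2"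
        using c by (metis abs_ge_zero power2_abs power_mono)
      also have "\<dots> \<le> 1 / real n" using n1 by (simp add: power2_eq_square divide_le_eq)
      finally show "norm (s n x) \<le> 1 / real n" unfolding s_def by simp
    qed
  qed
  have "(\<lambda>n. integral\<^sup>L M (s n)) \<longlonglongrightarrow> integral\<^sup>L M (\<lambda>x. 0)"
    by (rule integral_dominated_convergence[OF _ sm wi]) (use lim bd in auto)
  hence "\<forall>\<^sub>F n in sequentially. integral\<^sup>L M (s n) < \<eta>" using eta by (simp add: order_tendstoD(2))
  then obtain n where n0: "\<forall>m\<ge>n. integral\<^sup>L M (s m) < \<eta>" unfolding eventually_sequentially by blast
  hence n: "integral\<^sup>L M (s n) < \<eta>" by simp
  define cl where "cl y = \<lfloor>real n * max (- real n) (min (real n) y)\<rfloor>" for y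
  define J where "J = {- (int n * int n)..int n * int n}"
  define \<beta> :: "int \<Rightarrow> real" where "\<beta> j = real_of_int j / real n" for j
  define S where "S j = {r. cl (h r) = j}" for j
  define E where "E j = {x. x \<in> A \<and> norm x \<in> S j}" for j
  obtain N where N: "{x \<in> space M. \<not> f x = h (norm x)} \<subseteq> N" "emeasure M N = 0" "N \<in> sets M"
    using h by (rule AE_E)
  have Nnull: "N \<in> null_sets lebesgue"
  proof -
    have "N \<in> null_sets M" using N by auto
    thus ?thesis unfolding M_def A_def using annulus_basic(4) null_sets_restrict_space by blast
  qed
  have Em: "E j \<in> sets lebesgue" for j
  proof -
    define F where "F = {x \<in> space M. cl (f x) = j}"
    have "F \<in> sets M" unfolding F_def cl_def by measurable
    hence Fl: "F \<in> sets lebesgue" unfolding M_def A_def by (simp add: sets_ann_iff)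
    have "E j \<inter> N \<in> sets lebesgue"
      by (rule completion.complete[OF _ Nnull]) auto
    moreover have "E j = (F - N) \<union> (E j \<inter> N)"
      using N(1) unfolding E_def F_def S_def M_def by auto
    ultimately show ?thesis using Fl Nnull by (metis null_setsD2 sets.Diff sets.Un)
  qed
  have EM: "E j \<in> sets M" for j using Em[of j] unfolding M_def A_def E_def by (simp add: sets_ann_iff)
  have eqae: "AE x in M. s n x = (f x - (\<Sum>j\<in>J. \<beta> j * indicator (E j) x))\<^sup>2"
    using h AE_space
  proof eventually_elim
    case (elim x)
    show ?case
    proof -
      have xA: "x \<in> A" using elim unfolding M_def by simp
      have ind: "indicator (E j) x = (if j = cl (f x) then 1 else 0 :: real)" for j
        using xA elim unfolding E_def S_def by (auto simp: indicator_def)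
      have "cl (f x) \<in> J" unfolding J_def cl_def by (rule qz_range)
      hence "(\<Sum>j\<in>J. \<beta> j * indicator (E j) x) = \<beta> (cl (f x))"
      proof -
        assume cJ: "cl (f x) \<in> J"
        have "(\<Sum>j\<in>J. \<beta> j * indicator (E j) x) = (\<Sum>j\<in>J. if j = cl (f x) then \<beta> j else 0)"
          unfolding ind by (rule sum.cong) auto
        also have "\<dots> = \<beta> (cl (f x))" using cJ by (simp add: J_def)
        finally show ?thesis .
      qed
      then show ?thesis unfolding s_def \<beta>_def qz_def cl_def by simp
    qed
  qed
  have "integral\<^sup>L M (s n) = integral\<^sup>L M (\<lambda>x. (f x - (\<Sum>j\<in>J. \<beta> j * indicator (E j) x))\<^sup>2)"
    by (rule integral_cong_AE[OF sm _ eqae]) (use EM in measurable)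
  hence lt: "integral\<^sup>L M (\<lambda>x. (f x - (\<Sum>j\<in>J. \<beta> j * indicator (E j) x))\<^sup>2) < \<eta>" using n by simp
  have fin: "finite J" by (simp add: J_def)
  have Em': "\<forall>j\<in>J. {x::'a. x \<in> annulus a b \<and> norm x \<in> S j} \<in> sets lebesgue" using Em[unfolded E_def A_def] by blast
  have lt': "integral\<^sup>L (lebesgue_on (annulus a b)) (\<lambda>x. (f x - (\<Sum>j\<in>J. \<beta> j * indicator {x. x \<in> annulus a b \<and> norm x \<in> S j} x))\<^sup>2) < \<eta>"
    using lt[unfolded E_def M_def A_def] .
  show ?thesis by (rule exI[of _ J], rule exI[of _ \<beta>], rule exI[of _ S]) (intro conjI fin Em' lt')
qed


lemma radial_cont_approx:
  fixes f :: "'a::euclidean_space \<Rightarrow> real"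
  assumes f: "f \<in> L2_rad (annulus a b)" and eta: "\<eta> > 0"
  shows "\<exists>G. continuous_on UNIV G \<and>
     integrable (lebesgue_on (annulus a b)) (\<lambda>x. (f x - G (norm x))\<^sup>2) \<and>
     integral\<^sup>L (lebesgue_on (annulus a b)) (\<lambda>x. (f x - G (norm x))\<^sup>2) < \<eta>"
proof -
  define A :: "'a set" where "A = annulus a b"
  define M where "M = lebesgue_on A"
  have fm: "f \<in> borel_measurable M" and f2: "integrable M (\<lambda>x. (f x)\<^sup>2)"
    using f unfolding L2_rad_def L2_on_def M_def A_def by auto
  obtain J :: "int set" and \<beta> S where J: "finite J"
    and Sm: "\<forall>j\<in>J. {x::'a. x \<in> annulus a b \<and> norm x \<in> S j} \<in> sets lebesgue"
    and Q: "integral\<^sup>L (lebesgue_on (annulus a b)) (\<lambda>x::'a. (f x - (\<Sum>j\<in>J. (\<beta> j :: real) * indicator {x. x \<in> annulus a b \<and> norm x \<in> S j} x))\<^sup>2) < \<eta> / 4"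
  proof -
    have "\<eta> / 4 > 0" using eta by simp
    from quantize_approx[OF f this] show ?thesis using that by blast
  qed
  define E where "E j = {x. x \<in> A \<and> norm x \<in> S j}" for j
  define C where "C = real (card J) * (\<Sum>j\<in>J. (\<beta> j)\<^sup>2) + 1"
  have C: "C > 0" unfolding C_def by (simp add: add_nonneg_pos sum_nonneg)
  define \<eta>' where "\<eta>' = \<eta> / (4 * C)"
  have eta': "\<eta>' > 0" unfolding \<eta>'_def using eta C by simp
  have "\<forall>j\<in>J. \<exists>g. continuous_on UNIV g \<and> (\<forall>r. 0 \<le> g r \<and> g r \<le> 1) \<and>
     integrable M (\<lambda>x. (indicator (E j) x - g (norm x))\<^sup>2) \<and>
     integral\<^sup>L M (\<lambda>x. (indicator (E j) x - g (norm x))\<^sup>2) \<le> \<eta>'"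
  proof
    fix j assume "j \<in> J"
    hence "{x::'a. x \<in> annulus a b \<and> norm x \<in> S j} \<in> sets lebesgue" using Sm by blast
    from indicator_approx[OF this eta'] show "\<exists>g. continuous_on UNIV g \<and> (\<forall>r. 0 \<le> g r \<and> g r \<le> 1) \<and>
     integrable M (\<lambda>x. (indicator (E j) x - g (norm x))\<^sup>2) \<and>
     integral\<^sup>L M (\<lambda>x. (indicator (E j) x - g (norm x))\<^sup>2) \<le> \<eta>'"
      unfolding E_def M_def A_def .
  qed
  from bchoice[OF this] obtain g where g0: "\<forall>j\<in>J. continuous_on UNIV (g j) \<and> (\<forall>r. 0 \<le> g j r \<and> g j r \<le> 1) \<and>
     integrable M (\<lambda>x. (indicator (E j) x - g j (norm x))\<^sup>2) \<and>
     integral\<^sup>L M (\<lambda>x. (indicator (E j) x - g j (norm x))\<^sup>2) \<le> \<eta>'" ..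
  have g: "continuous_on UNIV (g j) \<and> (\<forall>r. 0 \<le> g j r \<and> g j r \<le> 1) \<and>
     integrable M (\<lambda>x. (indicator (E j) x - g j (norm x))\<^sup>2) \<and>
     integral\<^sup>L M (\<lambda>x. (indicator (E j) x - g j (norm x))\<^sup>2) \<le> \<eta>'" if "j \<in> J" for j
    using g0 that by (rule bspec)
  have EM: "E j \<in> sets M" if "j \<in> J" for j
    using Sm that unfolding E_def M_def A_def by (simp add: sets_ann_iff)
  define G where "G r = (\<Sum>j\<in>J. \<beta> j * g j r)" for r
  have Gc: "continuous_on UNIV G" unfolding G_def using g by (auto intro!: continuous_intros)
  define Qf where "Qf x = (\<Sum>j\<in>J. \<beta> j * indicator (E j) x)" for x
  define v where "v x = (\<Sum>j\<in>J. \<beta> j * (indicator (E j) x - g j (norm x)))" for x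
  have gm: "(\<lambda>x. g j (norm x)) \<in> borel_measurable M" if "j \<in> J" for j
    unfolding M_def A_def using cont_norm_meas g that by blast
  have Qm: "Qf \<in> borel_measurable M" unfolding Qf_def using EM by (auto intro!: borel_measurable_sum borel_measurable_times borel_measurable_indicator)
  have vm: "v \<in> borel_measurable M" unfolding v_def using EM gm
    by (auto intro!: borel_measurable_sum borel_measurable_times borel_measurable_indicator borel_measurable_diff)
  have Qb: "\<bar>Qf x\<bar> \<le> (\<Sum>j\<in>J. \<bar>\<beta> j\<bar>)" for x
  proof -
    have "\<bar>Qf x\<bar> \<le> (\<Sum>j\<in>J. \<bar>\<beta> j * indicator (E j) x\<bar>)" unfolding Qf_def by (rule sum_abs)
    also have "\<dots> \<le> (\<Sum>j\<in>J. \<bar>\<beta> j\<bar>)" by (intro sum_mono) (auto simp: indicator_def abs_mult)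
    finally show ?thesis .
  qed
  have vb: "\<bar>v x\<bar> \<le> (\<Sum>j\<in>J. \<bar>\<beta> j\<bar>)" for x
  proof -
    have "\<bar>v x\<bar> \<le> (\<Sum>j\<in>J. \<bar>\<beta> j * (indicator (E j) x - g j (norm x))\<bar>)" unfolding v_def by (rule sum_abs)
    also have "\<dots> \<le> (\<Sum>j\<in>J. \<bar>\<beta> j\<bar>)"
    proof (intro sum_mono)
      fix j assume j: "j \<in> J"
      have "\<bar>indicator (E j) x - g j (norm x)\<bar> \<le> 1" using g[OF j] by (auto simp: indicator_def)
      thus "\<bar>\<beta> j * (indicator (E j) x - g j (norm x))\<bar> \<le> \<bar>\<beta> j\<bar>"
        by (simp add: abs_mult mult_left_le)
    qed
    finally show ?thesis .
  qed
  have Q2: "integrable M (\<lambda>x. (Qf x)\<^sup>2)"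
    unfolding M_def A_def
  proof (rule bounded_integrable_ann[where B="(\<Sum>j\<in>J. \<bar>\<beta> j\<bar>)\<^sup>2"])
    show "(\<lambda>x. (Qf x)\<^sup>2) \<in> borel_measurable (lebesgue_on (annulus a b))" using Qm unfolding M_def A_def by measurable
    fix x show "\<bar>(Qf x)\<^sup>2\<bar> \<le> (\<Sum>j\<in>J. \<bar>\<beta> j\<bar>)\<^sup>2"
      using power_mono[OF Qb[of x] abs_ge_zero, of 2] by simp
  qed
  have v2: "integrable M (\<lambda>x. (v x)\<^sup>2)"
    unfolding M_def A_def
  proof (rule bounded_integrable_ann[where B="(\<Sum>j\<in>J. \<bar>\<beta> j\<bar>)\<^sup>2"])
    show "(\<lambda>x. (v x)\<^sup>2) \<in> borel_measurable (lebesgue_on (annulus a b))" using vm unfolding M_def A_def by measurable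
    fix x show "\<bar>(v x)\<^sup>2\<bar> \<le> (\<Sum>j\<in>J. \<bar>\<beta> j\<bar>)\<^sup>2"
      using power_mono[OF vb[of x] abs_ge_zero, of 2] by simp
  qed
  have um: "(\<lambda>x. f x + - Qf x) \<in> borel_measurable M" using fm Qm by measurable
  have u2: "integrable M (\<lambda>x. (f x + - Qf x)\<^sup>2)"
    using sq_add_le(1)[OF fm f2, of "\<lambda>x. - Qf x"] Qm Q2 by simp
  have uint: "integral\<^sup>L M (\<lambda>x. (f x + - Qf x)\<^sup>2) < \<eta> / 4"
    using Q unfolding Qf_def E_def M_def A_def by simp
  have vint: "integral\<^sup>L M (\<lambda>x. (v x)\<^sup>2) \<le> \<eta> / 4"
  proof -
    have di: "integrable M (\<lambda>x. (indicator (E j) x - g j (norm x))\<^sup>2)" if "j \<in> J" for j using g[OF that] by blast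
    have bi: "integrable M (\<lambda>x. real (card J) * (\<Sum>j\<in>J. (\<beta> j)\<^sup>2 * (indicator (E j) x - g j (norm x))\<^sup>2))"
      using di by auto
    have "integral\<^sup>L M (\<lambda>x. (v x)\<^sup>2) \<le> integral\<^sup>L M (\<lambda>x. real (card J) * (\<Sum>j\<in>J. (\<beta> j)\<^sup>2 * (indicator (E j) x - g j (norm x))\<^sup>2))"
    proof (rule Bochner_Integration.integral_mono[OF v2 bi])
      fix x
      have "(v x)\<^sup>2 \<le> (\<Sum>j\<in>J. (\<beta> j * (indicator (E j) x - g j (norm x)))\<^sup>2) * real (card J)"
        unfolding v_def by (rule sum_squared_le_sum_of_squares)
      thus "(v x)\<^sup>2 \<le> real (card J) * (\<Sum>j\<in>J. (\<beta> j)\<^sup>2 * (indicator (E j) x - g j (norm x))\<^sup>2)"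
        by (simp add: power_mult_distrib mult.commute)
    qed
    also have "\<dots> = real (card J) * (\<Sum>j\<in>J. (\<beta> j)\<^sup>2 * integral\<^sup>L M (\<lambda>x. (indicator (E j) x - g j (norm x))\<^sup>2))"
      using di by (simp add: integral_sum)
    also have "\<dots> \<le> real (card J) * (\<Sum>j\<in>J. (\<beta> j)\<^sup>2 * \<eta>')"
      using g by (intro mult_left_mono sum_mono) auto
    also have "\<dots> = \<eta>' * (real (card J) * (\<Sum>j\<in>J. (\<beta> j)\<^sup>2))"
      by (simp add: sum_distrib_left sum_distrib_right algebra_simps)
    also have "\<dots> \<le> \<eta>' * C" using eta' unfolding C_def by simp
    also have "\<dots> = \<eta> / 4" unfolding \<eta>'_def using C by simp
    finally show ?thesis .
  qed
  have eq: "f x - G (norm x) = (f x + - Qf x) + v x" for x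
    unfolding Qf_def v_def G_def by (simp add: sum_subtractf right_diff_distrib)
  have fin1: "integrable M (\<lambda>x. ((f x + - Qf x) + v x)\<^sup>2)"
    and fin2: "integral\<^sup>L M (\<lambda>x. ((f x + - Qf x) + v x)\<^sup>2) \<le> 2 * integral\<^sup>L M (\<lambda>x. (f x + - Qf x)\<^sup>2) + 2 * integral\<^sup>L M (\<lambda>x. (v x)\<^sup>2)"
    using sq_add_le[OF um u2 vm v2] by auto
  have "integral\<^sup>L M (\<lambda>x. (f x - G (norm x))\<^sup>2) < \<eta>"
    unfolding eq using fin2 uint vint by linarith
  moreover have "integrable M (\<lambda>x. (f x - G (norm x))\<^sup>2)" unfolding eq by (rule fin1)
  ultimately show ?thesis using Gc unfolding M_def A_def by blast
qed


theorem mainTheorem7: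
  fixes a b :: real
    and \<mu>p \<mu>m \<mu> :: "nat \<Rightarrow> real"
  assumes ab: "0 < a" "a < b"
    and pos_inj: "inj \<mu>p" and pos: "\<And>k. \<mu>p k > 0"
    and pos_lim: "filterlim \<mu>p at_top sequentially"
    and pos_div: "\<not> summable (\<lambda>k. 1 / \<mu>p k)"
    and neg_inj: "inj \<mu>m" and neg: "\<And>k. \<mu>m k < 0"
    and neg_lim: "filterlim \<mu>m at_bot sequentially"
    and neg_div: "\<not> summable (\<lambda>k. 1 / \<bar>\<mu>m k\<bar>)"
    and enum: "bij_betw \<mu> UNIV (range \<mu>p \<union> range \<mu>m)"
  shows "\<forall>f \<in> (L2_rad (annulus a b :: 'a::euclidean_space set)). \<forall>\<epsilon>>0.
           \<exists>K. \<exists>g \<in> H \<mu> K. L2_dist (annulus a b) f g < \<epsilon>"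
proof (intro ballI allI impI)
  fix f :: "'a \<Rightarrow> real" and \<epsilon> :: real
  assume f: "f \<in> L2_rad (annulus a b)" and e: "\<epsilon> > 0"
  define A :: "'a set" where "A = annulus a b"
  define M where "M = lebesgue_on A"
  have fm: "f \<in> borel_measurable M"
    using f unfolding L2_rad_def L2_on_def M_def A_def by auto
  have Lex: "\<exists>L. inj L \<and> range L \<subseteq> range \<mu>p \<and> (\<forall>j. L j > real N) \<and> \<not> summable (\<lambda>j. 1 / L j)" for N :: nat
  proof -
    have "eventually (\<lambda>k. real N < \<mu>p k) sequentially"
      using pos_lim unfolding filterlim_at_top_dense by blast
    then obtain k0 where k0: "\<And>k. k \<ge> k0 \<Longrightarrow> real N < \<mu>p k" unfolding eventually_sequentially by blast
    define L where "L j = \<mu>p (j + k0)" for j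
    have "inj L"
    proof (rule injI)
      fix x y assume "L x = L y"
      hence "x + k0 = y + k0" using pos_inj unfolding L_def inj_def by blast
      thus "x = y" by simp
    qed
    moreover have "range L \<subseteq> range \<mu>p" unfolding L_def by auto
    moreover have "\<forall>j. L j > real N" unfolding L_def using k0 by auto
    moreover have "\<not> summable (\<lambda>j. 1 / L j)"
      unfolding L_def using pos_div summable_iff_shift[of "\<lambda>k. 1 / \<mu>p k" k0] by simp
    ultimately show ?thesis by blast
  qed
  obtain G where Gc: "continuous_on UNIV G"
    and Gi: "integrable M (\<lambda>x. (f x - G (norm x))\<^sup>2)"
    and Gl: "integral\<^sup>L M (\<lambda>x. (f x - G (norm x))\<^sup>2) < \<epsilon>\<^sup>2 / 4"
  proof -
    have "\<epsilon>\<^sup>2 / 4 > 0" using e by simp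
    from radial_cont_approx[OF f this] show ?thesis using that unfolding M_def A_def by blast
  qed
  define mA where "mA = measure lebesgue A"
  have mA: "mA \<ge> 0" unfolding mA_def by simp
  define \<delta> where "\<delta> = \<epsilon> / (2 * sqrt (mA + 1))"
  have d: "\<delta> > 0" unfolding \<delta>_def using e mA by simp
  have d2: "\<delta>\<^sup>2 = \<epsilon>\<^sup>2 / (4 * (mA + 1))" unfolding \<delta>_def using mA by (simp add: power_divide power_mult_distrib)
  have "app (range \<mu>p) a b G"
    by (rule app_continuous) (use ab Lex continuous_on_subset[OF Gc] in auto)
  then obtain F w c where F: "finite F" "F \<subseteq> range \<mu>p"
    and Fa: "\<And>r. r \<in> {a..b} \<Longrightarrow> \<bar>G r - ((\<Sum>e\<in>F. w e * r powr e) + c)\<bar> \<le> \<delta>"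
    using d unfolding app_def by meson
  have muinj: "inj \<mu>" using enum by (simp add: bij_betw_def)
  have Fmu: "F \<subseteq> range \<mu>" using F(2) enum by (auto simp: bij_betw_def)
  obtain K where K: "inv \<mu> ` F \<subseteq> {..<K}" using F(1) finite_nat_iff_bounded by blast
  define cc where "cc k = (if \<mu> k \<in> F then w (\<mu> k) else 0)" for k
  define g where "g = (\<lambda>x::'a. (\<Sum>k<K. cc k * norm x powr \<mu> k) + c)"
  have gH: "g \<in> H \<mu> K" unfolding H_def g_def by blast
  have sumeq: "(\<Sum>k<K. cc k * t powr \<mu> k) = (\<Sum>e\<in>F. w e * t powr e)" for t
  proof -
    have "(\<Sum>k<K. cc k * t powr \<mu> k) = (\<Sum>k\<in>{k. k < K \<and> \<mu> k \<in> F}. w (\<mu> k) * t powr \<mu> k)"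
      unfolding cc_def by (rule sum.mono_neutral_cong_right) auto
    also have "\<dots> = (\<Sum>e\<in>F. w e * t powr e)"
    proof (rule sum.reindex_bij_betw)
      show "bij_betw \<mu> {k. k < K \<and> \<mu> k \<in> F} F"
        unfolding bij_betw_def
      proof
        show "inj_on \<mu> {k. k < K \<and> \<mu> k \<in> F}" using muinj by (simp add: inj_on_def inj_def)
        show "\<mu> ` {k. k < K \<and> \<mu> k \<in> F} = F"
        proof
          show "\<mu> ` {k. k < K \<and> \<mu> k \<in> F} \<subseteq> F" by auto
          show "F \<subseteq> \<mu> ` {k. k < K \<and> \<mu> k \<in> F}"
          proof
            fix e assume eF: "e \<in> F"
            have ee: "\<mu> (inv \<mu> e) = e" using eF Fmu by (simp add: f_inv_into_f subset_iff)
            have "inv \<mu> e < K" using K eF by auto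
            thus "e \<in> \<mu> ` {k. k < K \<and> \<mu> k \<in> F}" using ee eF by (metis (mono_tags, lifting) image_eqI mem_Collect_eq)
          qed
        qed
      qed
    qed
    finally show ?thesis .
  qed
  have geq: "g x = (\<Sum>e\<in>F. w e * norm x powr e) + c" for x unfolding g_def sumeq ..
  define u where "u x = f x + - G (norm x)" for x
  define v where "v x = G (norm x) - g x" for x
  have Gm: "(\<lambda>x. G (norm x)) \<in> borel_measurable M" unfolding M_def A_def by (rule cont_norm_meas[OF Gc])
  have gm: "g \<in> borel_measurable M"
  proof -
    have npos: "\<forall>x\<in>A. 0 < norm x" using ab unfolding A_def annulus_def by auto
    have "continuous_on A g" unfolding g_def using npos by (auto intro!: continuous_intros)
    thus ?thesis unfolding M_def A_def using annulus_basic(4) by (rule continuous_imp_measurable_on_sets_lebesgue)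
  qed
  have um: "u \<in> borel_measurable M" unfolding u_def using fm Gm by measurable
  have u2: "integrable M (\<lambda>x. (u x)\<^sup>2)" unfolding u_def using Gi by simp
  have vm: "v \<in> borel_measurable M" unfolding v_def using Gm gm by measurable
  have vb: "(v x)\<^sup>2 \<le> \<delta>\<^sup>2" if "x \<in> A" for x
  proof -
    have "norm x \<in> {a..b}" using that unfolding A_def annulus_def by auto
    hence "\<bar>v x\<bar> \<le> \<delta>" using Fa unfolding v_def geq by blast
    thus ?thesis using power_mono[of "\<bar>v x\<bar>" \<delta> 2] by simp
  qed
  have v2: "integrable M (\<lambda>x. (v x)\<^sup>2)"
    unfolding M_def A_def
  proof (rule bounded_integrable_ann[where B="\<delta>\<^sup>2"])
    show "(\<lambda>x. (v x)\<^sup>2) \<in> borel_measurable (lebesgue_on (annulus a b))" using vm unfolding M_def A_def by measurable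
    fix x :: 'a assume "x \<in> annulus a b"
    thus "\<bar>(v x)\<^sup>2\<bar> \<le> \<delta>\<^sup>2" using vb unfolding A_def by simp
  qed
  have vint: "integral\<^sup>L M (\<lambda>x. (v x)\<^sup>2) \<le> \<delta>\<^sup>2 * mA"
  proof -
    interpret finite_measure M unfolding M_def A_def by (rule finite_measure_ann)
    have "integral\<^sup>L M (\<lambda>x. (v x)\<^sup>2) \<le> integral\<^sup>L M (\<lambda>x. \<delta>\<^sup>2)"
    proof -
      have ci: "integrable M (\<lambda>x. \<delta>\<^sup>2)" by simp
      show ?thesis by (rule Bochner_Integration.integral_mono[OF v2 ci]) (use vb in \<open>auto simp: M_def\<close>)
    qed
    also have "\<dots> = \<delta>\<^sup>2 * measure M A" by (simp add: M_def mult.commute)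
    also have "measure M A = mA" unfolding M_def mA_def
      by (rule measure_restrict_space) (use annulus_basic(4)[of a b] in \<open>auto simp: A_def\<close>)
    finally show ?thesis .
  qed
  have eq: "f x - g x = u x + v x" for x unfolding u_def v_def by simp
  have I: "integral\<^sup>L M (\<lambda>x. (u x + v x)\<^sup>2) \<le> 2 * integral\<^sup>L M (\<lambda>x. (u x)\<^sup>2) + 2 * integral\<^sup>L M (\<lambda>x. (v x)\<^sup>2)"
    by (rule sq_add_le(2)[OF um u2 vm v2])
  have uint: "integral\<^sup>L M (\<lambda>x. (u x)\<^sup>2) < \<epsilon>\<^sup>2 / 4" using Gl unfolding u_def by simp
  have "2 * (\<delta>\<^sup>2 * mA) \<le> \<epsilon>\<^sup>2 / 2"
  proof -
    have "2 * (\<delta>\<^sup>2 * mA) = \<epsilon>\<^sup>2 / 2 * (mA / (mA + 1))" unfolding d2 using mA by (simp add: field_simps)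
    also have "\<dots> \<le> \<epsilon>\<^sup>2 / 2 * 1" using mA by (intro mult_left_mono) auto
    finally show ?thesis by simp
  qed
  hence tot: "integral\<^sup>L M (\<lambda>x. (f x - g x)\<^sup>2) < \<epsilon>\<^sup>2"
    unfolding eq using I uint vint by linarith
  have "L2_dist (annulus a b) f g = sqrt (integral\<^sup>L M (\<lambda>x. (f x - g x)\<^sup>2))"
    unfolding L2_dist_def M_def A_def ..
  also have "\<dots> < sqrt (\<epsilon>\<^sup>2)" using tot by (rule real_sqrt_less_mono)
  also have "\<dots> = \<epsilon>" using e by simp
  finally show "\<exists>K. \<exists>g \<in> H \<mu> K. L2_dist (annulus a b) f g < \<epsilon>" using gH by blast
qed


end
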